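(* Let $d=4k+1$ with $k\ge3$. Consider the families (all indices read modulo $d$) $C^0=\{L^0_{1+i,2k+i}\}_{i=0}^{k}\cup\{L^0_{k+i,k+i}\}_{i=2}^{k-1}\cup\{L^0_{2k+i,1+i}\}_{i=0}^{k}\cup\{L^0_{3k+i,3k+i}\}_{i=1}^{k+1}$, $C^1=\{L^1_{2k+1,2k+i}\}_{i=1}^{k-1}\cup\{L^1_{3k+1,2k}\}\cup\{L^1_{1,k+i}\}_{i=0}^{k-1}\cup\{L^1_{2k+1,i}\}_{i=0}^{k-1}\cup\{L^1_{3k+2,4k}\}\cup\{L^1_{2,3k+i}\}_{i=0}^{k-1}$, $C^2=\{L^2_{1,i}\}_{i=0}^{k-1}\cup\{L^2_{2k+2,3k+i}\}_{i=0}^{k}\cup\{L^2_{2,2k+i}\}_{i=0}^{k-1}\cup\{L^2_{2k+2,k+i}\}_{i=0}^{k-1}$. Then $C^0\cup C^1\cup C^2$ consists of $3d$ pairwise disjoint lines on ${\rm F}_d$.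
   Context: ${\rm F}_d\subset\mathbb{P}^3(\mathbb{C})$ is the surface $x^d-y^d-z^d+w^d=0$ ($d$ odd). Fix a primitive $d$-th root of unity $\eta$ and put $v=-1$. For integers $k,i$ (taken modulo $d$) define the lines $L^0_{k,i}:\{y=\eta^i x,\ w=\eta^k z\}$, $L^1_{k,i}:\{x=\eta^{k+i}z,\ y=\eta^i w\}$, $L^2_{k,i}:\{x=v\eta^i w,\ y=v\eta^{k+i}z\}$, all lying on ${\rm F}_d$. *)

theory Defs
  imports Complex_Main
begin

text \<open>Points of P^3(C) are represented by their homogeneous coordinate vectors
(x,y,z,w) in C^4; a projective line is represented by the 2-dimensional linear
subspace of C^4 (its cone). Two projective lines are disjoint iff their cones
meet only in the zero vector.\<close>

type_synonym vec4 = "complex \<times> complex \<times> complex \<times> complex"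

definition Fermat :: "nat \<Rightarrow> vec4 set" where
  "Fermat d = {(x,y,z,w). x^d - y^d - z^d + w^d = 0}"

definition vv :: complex where "vv = -1"

definition L0 :: "complex \<Rightarrow> int \<Rightarrow> int \<Rightarrow> vec4 set" where
  "L0 \<eta> k i = {(x,y,z,w). y = \<eta> powi i * x \<and> w = \<eta> powi k * z}"

definition L1 :: "complex \<Rightarrow> int \<Rightarrow> int \<Rightarrow> vec4 set" where
  "L1 \<eta> k i = {(x,y,z,w). x = \<eta> powi (k+i) * z \<and> y = \<eta> powi i * w}"

definition L2 :: "complex \<Rightarrow> int \<Rightarrow> int \<Rightarrow> vec4 set" where
  "L2 \<eta> k i = {(x,y,z,w). x = vv * \<eta> powi i * w \<and> y = vv * \<eta> powi (k+i) * z}"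

definition C0 :: "complex \<Rightarrow> int \<Rightarrow> vec4 set set" where
  "C0 \<eta> k =
     (\<lambda>i. L0 \<eta> (1+i) (2*k+i)) ` {0..k}
   \<union> (\<lambda>i. L0 \<eta> (k+i) (k+i)) ` {2..k-1}
   \<union> (\<lambda>i. L0 \<eta> (2*k+i) (1+i)) ` {0..k}
   \<union> (\<lambda>i. L0 \<eta> (3*k+i) (3*k+i)) ` {1..k+1}"

definition C1 :: "complex \<Rightarrow> int \<Rightarrow> vec4 set set" where
  "C1 \<eta> k =
     (\<lambda>i. L1 \<eta> (2*k+1) (2*k+i)) ` {1..k-1}
   \<union> {L1 \<eta> (3*k+1) (2*k)}
   \<union> (\<lambda>i. L1 \<eta> 1 (k+i)) ` {0..k-1}
   \<union> (\<lambda>i. L1 \<eta> (2*k+1) i) ` {0..k-1}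
   \<union> {L1 \<eta> (3*k+2) (4*k)}
   \<union> (\<lambda>i. L1 \<eta> 2 (3*k+i)) ` {0..k-1}"

definition C2 :: "complex \<Rightarrow> int \<Rightarrow> vec4 set set" where
  "C2 \<eta> k =
     (\<lambda>i. L2 \<eta> 1 i) ` {0..k-1}
   \<union> (\<lambda>i. L2 \<eta> (2*k+2) (3*k+i)) ` {0..k}
   \<union> (\<lambda>i. L2 \<eta> 2 (2*k+i)) ` {0..k-1}
   \<union> (\<lambda>i. L2 \<eta> (2*k+2) (k+i)) ` {0..k-1}"

end

theory Submission
  imports Defs
begin

definition prim :: "complex \<Rightarrow> nat \<Rightarrow> bool" where
  "prim e d \<longleftrightarrow> d > 0 \<and> e ^ d = 1 \<and> (\<forall>m::nat. 0 < m \<and> m < d \<longrightarrow> e ^ m \<noteq> 1)"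

lemma prim_nz: "prim e d \<Longrightarrow> e \<noteq> 0"
  unfolding prim_def by (metis power_0_left zero_neq_one gr_implies_not0)

lemma prim_powi_d: assumes "prim e d" shows "e powi (int d * q) = 1"
  using assms unfolding prim_def by (simp add: power_int_mult power_int_of_nat)

lemma prim_one: assumes "prim e d" "e powi c = 1" shows "int d dvd c"
proof -
  have nz: "e \<noteq> 0" using prim_nz assms(1) .
  have d0: "d > 0" using assms(1) prim_def by auto
  have c: "c = int d * (c div int d) + c mod int d" by simp
  have "e powi c = e powi (int d * (c div int d)) * e powi (c mod int d)"
    using power_int_add[OF disjI1[OF nz], of "int d * (c div int d)" "c mod int d"] c by simp
  hence "e powi (c mod int d) = 1" using assms prim_powi_d by simp
  moreover have "c mod int d = int (nat (c mod int d))" using d0 by simp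
  ultimately have "e ^ nat (c mod int d) = 1" by (metis power_int_of_nat)
  moreover have "nat (c mod int d) < d" using d0
    by (simp add: nat_less_iff)
  ultimately have "nat (c mod int d) = 0" using assms(1) unfolding prim_def by (metis gr0I)
  hence "c mod int d = 0" using d0 by (metis \<open>c mod int d = int (nat (c mod int d))\<close> of_nat_0)
  thus ?thesis by auto
qed

lemma prim_eq: assumes "prim e d" "e powi a * z = e powi b * z" "\<not> int d dvd (a - b)"
  shows "z = 0"
proof (rule ccontr)
  assume "z \<noteq> 0"
  hence "e powi a = e powi b" using assms(2) by simp
  hence "e powi (a - b) = 1" using prim_nz[OF assms(1)] by (simp add: power_int_diff)
  thus False using prim_one assms by blast
qed

lemma prim_pow_d: assumes "prim e d" shows "(e powi i) ^ d = 1"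
proof -
  have "(e powi i) ^ d = e powi (int d * i)" by (simp add: power_int_power' mult.commute)
  thus ?thesis using prim_powi_d assms by simp
qed

definition nd :: "nat \<Rightarrow> int \<Rightarrow> int \<Rightarrow> bool" where
  "nd d a b \<longleftrightarrow> \<not> int d dvd (a - b)"

lemma nd_sym: "nd d a b = nd d b a"
  unfolding nd_def by (metis dvd_minus_iff minus_diff_eq)

lemma nd_eq: "nd d a b \<Longrightarrow> a' - b' = a - b \<Longrightarrow> nd d a' b'"
  unfolding nd_def by simp

lemma peq: "prim e d \<Longrightarrow> e powi a * z = e powi b * z \<Longrightarrow> nd d a b \<Longrightarrow> z = 0"
  using prim_eq nd_def by blast

lemma vv2: "vv * vv = 1" by (simp add: vv_def)
lemma vvnz: "vv \<noteq> 0" by (simp add: vv_def)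

lemma d00: assumes "prim e d" "nd d b b'" "nd d a a'"
  shows "L0 e a b \<inter> L0 e a' b' \<subseteq> {(0,0,0,0)}"
proof
  fix p assume "p \<in> L0 e a b \<inter> L0 e a' b'"
  then obtain x y z w where p: "p = (x,y,z,w)" and h: "y = e powi b * x" "w = e powi a * z"
     "y = e powi b' * x" "w = e powi a' * z" by (cases p) (simp add: L0_def)
  have "e powi b * x = e powi b' * x" using h by metis
  hence "x = 0" using peq[OF assms(1) _ assms(2)] by blast
  moreover have "e powi a * z = e powi a' * z" using h by metis
  hence "z = 0" using peq[OF assms(1) _ assms(3)] by blast
  ultimately show "p \<in> {(0,0,0,0)}" using p h by simp
qed

lemma d11: assumes "prim e d" "nd d b b'" "nd d (a+b) (a'+b')"
  shows "L1 e a b \<inter> L1 e a' b' \<subseteq> {(0,0,0,0)}"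
proof
  fix p assume "p \<in> L1 e a b \<inter> L1 e a' b'"
  then obtain x y z w where p: "p = (x,y,z,w)" and h: "x = e powi (a+b) * z" "y = e powi b * w"
     "x = e powi (a'+b') * z" "y = e powi b' * w" by (cases p) (simp add: L1_def)
  have "e powi b * w = e powi b' * w" using h by metis
  hence "w = 0" using peq[OF assms(1) _ assms(2)] by blast
  moreover have "e powi (a+b) * z = e powi (a'+b') * z" using h by metis
  hence "z = 0" using peq[OF assms(1) _ assms(3)] by blast
  ultimately show "p \<in> {(0,0,0,0)}" using p h by simp
qed

lemma d22: assumes "prim e d" "nd d b b'" "nd d (a+b) (a'+b')"
  shows "L2 e a b \<inter> L2 e a' b' \<subseteq> {(0,0,0,0)}"
proof
  fix p assume "p \<in> L2 e a b \<inter> L2 e a' b'"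
  then obtain x y z w where p: "p = (x,y,z,w)" and h: "x = vv * e powi b * w" "y = vv * e powi (a+b) * z"
     "x = vv * e powi b' * w" "y = vv * e powi (a'+b') * z" by (cases p) (simp add: L2_def)
  have "vv * (e powi b * w) = vv * (e powi b' * w)" using h by (metis mult.assoc)
  hence "e powi b * w = e powi b' * w" using vvnz by simp
  hence "w = 0" using peq[OF assms(1) _ assms(2)] by blast
  moreover have "vv * (e powi (a+b) * z) = vv * (e powi (a'+b') * z)" using h by (metis mult.assoc)
  hence "e powi (a+b) * z = e powi (a'+b') * z" using vvnz by simp
  hence "z = 0" using peq[OF assms(1) _ assms(3)] by blast
  ultimately show "p \<in> {(0,0,0,0)}" using p h by simp
qed

lemma d01: assumes "prim e d" "nd d (b+a') a"
  shows "L0 e a b \<inter> L1 e a' b' \<subseteq> {(0,0,0,0)}"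
proof
  have nz: "e \<noteq> 0" using prim_nz assms(1) .
  fix p assume "p \<in> L0 e a b \<inter> L1 e a' b'"
  then obtain x y z w where p: "p = (x,y,z,w)" and h: "y = e powi b * x" "w = e powi a * z"
     "x = e powi (a'+b') * z" "y = e powi b' * w" by (cases p) (simp add: L0_def L1_def)
  have "e powi (b+a'+b') * z = e powi (a+b') * z"
  proof -
    have "e powi (b+a'+b') * z = e powi b * (e powi (a'+b') * z)" by (simp add: power_int_add nz)
    also have "\<dots> = e powi b' * (e powi a * z)" using h by metis
    also have "\<dots> = e powi (a+b') * z" by (simp add: power_int_add nz)
    finally show ?thesis .
  qed
  moreover have "nd d (b+a'+b') (a+b')" using assms(2) by (rule nd_eq, simp)
  ultimately have "z = 0" using peq[OF assms(1)] by blast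
  thus "p \<in> {(0,0,0,0)}" using p h by simp
qed

lemma d02: assumes "prim e d" "nd d (b+a) a'"
  shows "L0 e a b \<inter> L2 e a' b' \<subseteq> {(0,0,0,0)}"
proof
  have nz: "e \<noteq> 0" using prim_nz assms(1) .
  fix p assume "p \<in> L0 e a b \<inter> L2 e a' b'"
  then obtain x y z w where p: "p = (x,y,z,w)" and h: "y = e powi b * x" "w = e powi a * z"
     "x = vv * e powi b' * w" "y = vv * e powi (a'+b') * z" by (cases p) (simp add: L0_def L2_def)
  have "vv * (e powi (b+b'+a) * z) = vv * (e powi (a'+b') * z)"
  proof -
    have "vv * (e powi (b+b'+a) * z) = e powi b * (vv * e powi b' * (e powi a * z))" by (simp add: power_int_add nz)
    also have "\<dots> = vv * e powi (a'+b') * z" using h by (metis mult.assoc)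
    also have "\<dots> = vv * (e powi (a'+b') * z)" by (simp add: mult.assoc)
    finally show ?thesis .
  qed
  hence "e powi (b+b'+a) * z = e powi (a'+b') * z" using vvnz by simp
  moreover have "nd d (b+b'+a) (a'+b')" using assms(2) by (rule nd_eq, simp)
  ultimately have "z = 0" using peq[OF assms(1)] by blast
  thus "p \<in> {(0,0,0,0)}" using p h by simp
qed

lemma d12: assumes "prim e d" "nd d (a+2*b-b') (a'+b')"
  shows "L1 e a b \<inter> L2 e a' b' \<subseteq> {(0,0,0,0)}"
proof
  have nz: "e \<noteq> 0" using prim_nz assms(1) .
  fix p assume "p \<in> L1 e a b \<inter> L2 e a' b'"
  then obtain x y z w where p: "p = (x,y,z,w)" and h: "x = e powi (a+b) * z" "y = e powi b * w"
     "x = vv * e powi b' * w" "y = vv * e powi (a'+b') * z" by (cases p) (simp add: L1_def L2_def)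
  have hx: "e powi (a+b) * z = vv * e powi b' * w" using h(1) h(3) by simp
  have hy: "e powi b * w = vv * e powi (a'+b') * z" using h(2) h(4) by simp
  have "e powi (a+b+b) * z = e powi (a'+b'+b') * z"
  proof -
    have "e powi (a+b+b) = e powi (a+b) * e powi b" by (rule power_int_add) (simp add: nz)
    hence "e powi (a+b+b) * z = e powi b * (e powi (a+b) * z)" by (simp add: mult_ac)
    also have "\<dots> = e powi b * (vv * e powi b' * w)" by (simp only: hx)
    also have "\<dots> = vv * e powi b' * (e powi b * w)" by (simp only: mult_ac)
    also have "\<dots> = vv * e powi b' * (vv * e powi (a'+b') * z)" by (simp only: hy)
    also have "\<dots> = (vv * vv) * (e powi b' * e powi (a'+b') * z)" by (simp only: mult_ac)
    also have "\<dots> = e powi b' * e powi (a'+b') * z" by (simp only: vv2 mult_1_left)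
    also have "\<dots> = e powi (a'+b'+b') * z"
      using power_int_add[of e "a'+b'" b'] nz by (simp add: mult_ac)
    finally show ?thesis .
  qed
  moreover have "nd d (a+b+b) (a'+b'+b')" using assms(2) by (rule nd_eq, simp)
  ultimately have "z = 0" using peq[OF assms(1)] by blast
  hence "x = 0" using h by simp
  hence "vv * e powi b' * w = 0" using h by simp
  hence "w = 0" using nz vvnz by simp
  thus "p \<in> {(0,0,0,0)}" using p h \<open>z = 0\<close> by simp
qed

definition line :: "complex \<Rightarrow> nat \<times> int \<times> int \<Rightarrow> vec4 set" where
  "line e p = (case p of (t,a,b) \<Rightarrow> if t = 0 then L0 e a b else if t = 1 then L1 e a b else L2 e a b)"

definition cond :: "nat \<Rightarrow> nat \<times> int \<times> int \<Rightarrow> nat \<times> int \<times> int \<Rightarrow> bool" where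
  "cond d p q = (case p of (t,a,b) \<Rightarrow> case q of (u,c,e) \<Rightarrow>
    if t=0 \<and> u=0 then nd d b e \<and> nd d a c
    else if t=1 \<and> u=1 then nd d b e \<and> nd d (a+b) (c+e)
    else if t\<ge>2 \<and> u\<ge>2 then nd d b e \<and> nd d (a+b) (c+e)
    else if t=0 \<and> u=1 then nd d (b+c) a
    else if t=1 \<and> u=0 then nd d (e+a) c
    else if t=0 then nd d (b+a) c
    else if u=0 then nd d (e+c) a
    else if t=1 then nd d (a+2*b-e) (c+e)
    else nd d (c+2*e-b) (a+b))"

lemma zero_line: "(0,0,0,0) \<in> line e p"
  by (cases p) (auto simp: line_def L0_def L1_def L2_def)

lemma line_disj_sub: assumes "prim e d" "cond d p q"
  shows "line e p \<inter> line e q \<subseteq> {(0,0,0,0)}"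
proof -
  obtain t a b where p: "p = (t,a,b)" by (cases p)
  obtain u c f where q: "q = (u,c,f)" by (cases q)
  consider "t=0" | "t=1" | "t\<ge>2" by linarith
  moreover consider "u=0" | "u=1" | "u\<ge>2" by linarith
  ultimately show ?thesis using assms(2) unfolding p q line_def cond_def
    apply (cases; cases)
    using d00[OF assms(1)] d11[OF assms(1)] d22[OF assms(1)] d01[OF assms(1)] d02[OF assms(1)]
      d12[OF assms(1)]
    by (simp_all add: Int_commute)
qed

lemma line_disj: "prim e d \<Longrightarrow> cond d p q \<Longrightarrow> line e p \<inter> line e q = {(0,0,0,0)}"
  using line_disj_sub zero_line by blast

lemma line_nz: assumes "e \<noteq> 0" shows "\<exists>v \<in> line e p. v \<noteq> (0,0,0,0)"
proof -
  obtain t a b where p: "p = (t,a,b)" by (cases p)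
  show ?thesis
  proof (cases "t = 0")
    case True thus ?thesis using p by (intro bexI[of _ "(1, e powi b, 0, 0)"]) (auto simp: line_def L0_def)
  next
    case f: False
    show ?thesis
    proof (cases "t = 1")
      case True thus ?thesis using p f
        by (intro bexI[of _ "(e powi (a+b), 0, 1, 0)"]) (auto simp: line_def L1_def)
    next
      case False thus ?thesis using p f
        by (intro bexI[of _ "(0, vv * e powi (a+b), 1, 0)"]) (auto simp: line_def L2_def)
    qed
  qed
qed

lemma line_F: assumes "prim e d" "odd d" shows "line e p \<subseteq> Fermat d"
proof
  fix v assume v: "v \<in> line e p"
  obtain t a b where p: "p = (t,a,b)" by (cases p)
  obtain x y z w where vv': "v = (x,y,z,w)" by (cases v)
  have P: "\<And>i. (e powi i) ^ d = 1" using prim_pow_d assms(1) by blast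
  have V: "vv ^ d = -1" using assms(2) by (simp add: vv_def)
  show "v \<in> Fermat d"
  proof (cases "t = 0")
    case True
    hence "y = e powi b * x" "w = e powi a * z" using v p vv' by (auto simp: line_def L0_def)
    thus ?thesis using vv' P by (simp add: Fermat_def power_mult_distrib)
  next
    case f: False
    show ?thesis
    proof (cases "t = 1")
      case True
      hence "x = e powi (a+b) * z" "y = e powi b * w" using v p vv' f by (auto simp: line_def L1_def)
      thus ?thesis using vv' P by (simp add: Fermat_def power_mult_distrib)
    next
      case False
      hence "x = vv * e powi b * w" "y = vv * e powi (a+b) * z" using v p vv' f by (auto simp: line_def L2_def)
      thus ?thesis using vv' P V by (simp add: Fermat_def power_mult_distrib)
    qed
  qed
qed

lemma ndI:
  fixes a b k :: int
  assumes D: "int d = 4*k+1" and k: "k \<ge> 3"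
    and lo: "-12*k-3 < a - b" and hi: "a - b < 12*k+3"
    and "a - b \<noteq> 0" "a - b \<noteq> 4*k+1" "a - b \<noteq> -4*k-1"
    "a - b \<noteq> 8*k+2" "a - b \<noteq> -8*k-2"
  shows "nd d a b"
proof -
  { assume "int d dvd (a - b)"
    then obtain t where t: "a - b = (4*k+1) * t" using D by (metis dvdE)
    have pos: "4*k+1 > 0" using k by simp
    have "t < 3"
    proof (rule ccontr)
      assume "\<not> t < 3" hence "(4*k+1) * 3 \<le> (4*k+1) * t" using pos by (intro mult_left_mono) auto
      thus False using hi t by simp
    qed
    moreover have "t > -3"
    proof (rule ccontr)
      assume "\<not> t > -3" hence "(4*k+1) * t \<le> (4*k+1) * (-3)" using pos by (intro mult_left_mono) auto
      thus False using lo t by simp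
    qed
    ultimately have "t = -2 \<or> t = -1 \<or> t = 0 \<or> t = 1 \<or> t = 2" by presburger
    hence False using t assms(5-) by (elim disjE) (simp_all add: algebra_simps)
  }
  thus ?thesis unfolding nd_def by blast
qed

lemma cond_sym: "cond d p q = cond d q p"
  by (cases p; cases q) (auto simp: cond_def nd_sym)

definition desc :: "int \<Rightarrow> nat \<Rightarrow> int \<Rightarrow> nat \<times> int \<times> int" where
 "desc k f i = (if f=0 then (0,1+i,2*k+i) else if f=1 then (0,k+i,k+i) else if f=2 then (0,2*k+i,1+i)
   else if f=3 then (0,3*k+i,3*k+i)
   else if f=4 then (1,2*k+1,2*k+i) else if f=5 then (1,3*k+1,i) else if f=6 then (1,1,k+i)
   else if f=7 then (1,2*k+1,i) else if f=8 then (1,3*k+2,i) else if f=9 then (1,2,3*k+i)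
   else if f=10 then (2,1,i) else if f=11 then (2,2*k+2,3*k+i) else if f=12 then (2,2,2*k+i)
   else (2,2*k+2,k+i))"

definition R :: "int \<Rightarrow> nat \<Rightarrow> int set" where
 "R k f = (if f=0 then {0..k} else if f=1 then {2..k-1} else if f=2 then {0..k} else if f=3 then {1..k+1}
   else if f=4 then {1..k-1} else if f=5 then {2*k..2*k} else if f=6 then {0..k-1}
   else if f=7 then {0..k-1} else if f=8 then {4*k..4*k} else if f=9 then {0..k-1}
   else if f=10 then {0..k-1} else if f=11 then {0..k} else if f=12 then {0..k-1} else {0..k-1})"

lemma p_0_0: assumes D: "int d = 4*k+1" and k: "k\<ge>3" and "i \<in> R k 0" "j \<in> R k 0" "i < j"
  shows "cond d (desc k 0 i) (desc k 0 j)"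
  using k assms(3-) unfolding R_def desc_def cond_def apply simp apply (intro conjI ndI[OF D k]) apply (linarith | presburger)+ done

lemma p_0_1: assumes D: "int d = 4*k+1" and k: "k\<ge>3" and "i \<in> R k 0" "j \<in> R k 1"
  shows "cond d (desc k 0 i) (desc k 1 j)"
  using k assms(3-) unfolding R_def desc_def cond_def apply simp apply (intro conjI ndI[OF D k]) apply (linarith | presburger)+ done

lemma p_0_2: assumes D: "int d = 4*k+1" and k: "k\<ge>3" and "i \<in> R k 0" "j \<in> R k 2"
  shows "cond d (desc k 0 i) (desc k 2 j)"
  using k assms(3-) unfolding R_def desc_def cond_def apply simp apply (intro conjI ndI[OF D k]) apply (linarith | presburger)+ done

lemma p_0_3: assumes D: "int d = 4*k+1" and k: "k\<ge>3" and "i \<in> R k 0" "j \<in> R k 3"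
  shows "cond d (desc k 0 i) (desc k 3 j)"
  using k assms(3-) unfolding R_def desc_def cond_def apply simp apply (intro conjI ndI[OF D k]) apply (linarith | presburger)+ done

lemma p_0_4: assumes D: "int d = 4*k+1" and k: "k\<ge>3" and "i \<in> R k 0" "j \<in> R k 4"
  shows "cond d (desc k 0 i) (desc k 4 j)"
  using k assms(3-) unfolding R_def desc_def cond_def apply simp apply (intro conjI ndI[OF D k]) apply (linarith | presburger)+ done

lemma p_0_5: assumes D: "int d = 4*k+1" and k: "k\<ge>3" and "i \<in> R k 0" "j \<in> R k 5"
  shows "cond d (desc k 0 i) (desc k 5 j)"
  using k assms(3-) unfolding R_def desc_def cond_def apply simp apply (intro conjI ndI[OF D k]) apply (linarith | presburger)+ done

lemma p_0_6: assumes D: "int d = 4*k+1" and k: "k\<ge>3" and "i \<in> R k 0" "j \<in> R k 6"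
  shows "cond d (desc k 0 i) (desc k 6 j)"
  using k assms(3-) unfolding R_def desc_def cond_def apply simp apply (intro conjI ndI[OF D k]) apply (linarith | presburger)+ done

lemma p_0_7: assumes D: "int d = 4*k+1" and k: "k\<ge>3" and "i \<in> R k 0" "j \<in> R k 7"
  shows "cond d (desc k 0 i) (desc k 7 j)"
  using k assms(3-) unfolding R_def desc_def cond_def apply simp apply (intro conjI ndI[OF D k]) apply (linarith | presburger)+ done

lemma p_0_8: assumes D: "int d = 4*k+1" and k: "k\<ge>3" and "i \<in> R k 0" "j \<in> R k 8"
  shows "cond d (desc k 0 i) (desc k 8 j)"
  using k assms(3-) unfolding R_def desc_def cond_def apply simp apply (intro conjI ndI[OF D k]) apply (linarith | presburger)+ done

lemma p_0_9: assumes D: "int d = 4*k+1" and k: "k\<ge>3" and "i \<in> R k 0" "j \<in> R k 9"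
  shows "cond d (desc k 0 i) (desc k 9 j)"
  using k assms(3-) unfolding R_def desc_def cond_def apply simp apply (intro conjI ndI[OF D k]) apply (linarith | presburger)+ done

lemma p_0_10: assumes D: "int d = 4*k+1" and k: "k\<ge>3" and "i \<in> R k 0" "j \<in> R k 10"
  shows "cond d (desc k 0 i) (desc k 10 j)"
  using k assms(3-) unfolding R_def desc_def cond_def apply simp apply (intro conjI ndI[OF D k]) apply (linarith | presburger)+ done

lemma p_0_11: assumes D: "int d = 4*k+1" and k: "k\<ge>3" and "i \<in> R k 0" "j \<in> R k 11"
  shows "cond d (desc k 0 i) (desc k 11 j)"
  using k assms(3-) unfolding R_def desc_def cond_def apply simp apply (intro conjI ndI[OF D k]) apply (linarith | presburger)+ done

lemma p_0_12: assumes D: "int d = 4*k+1" and k: "k\<ge>3" and "i \<in> R k 0" "j \<in> R k 12"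
  shows "cond d (desc k 0 i) (desc k 12 j)"
  using k assms(3-) unfolding R_def desc_def cond_def apply simp apply (intro conjI ndI[OF D k]) apply (linarith | presburger)+ done

lemma p_0_13: assumes D: "int d = 4*k+1" and k: "k\<ge>3" and "i \<in> R k 0" "j \<in> R k 13"
  shows "cond d (desc k 0 i) (desc k 13 j)"
  using k assms(3-) unfolding R_def desc_def cond_def apply simp apply (intro conjI ndI[OF D k]) apply (linarith | presburger)+ done

lemma p_1_1: assumes D: "int d = 4*k+1" and k: "k\<ge>3" and "i \<in> R k 1" "j \<in> R k 1" "i < j"
  shows "cond d (desc k 1 i) (desc k 1 j)"
  using k assms(3-) unfolding R_def desc_def cond_def apply simp apply (intro conjI ndI[OF D k]) apply (linarith | presburger)+ done

lemma p_1_2: assumes D: "int d = 4*k+1" and k: "k\<ge>3" and "i \<in> R k 1" "j \<in> R k 2"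
  shows "cond d (desc k 1 i) (desc k 2 j)"
  using k assms(3-) unfolding R_def desc_def cond_def apply simp apply (intro conjI ndI[OF D k]) apply (linarith | presburger)+ done

lemma p_1_3: assumes D: "int d = 4*k+1" and k: "k\<ge>3" and "i \<in> R k 1" "j \<in> R k 3"
  shows "cond d (desc k 1 i) (desc k 3 j)"
  using k assms(3-) unfolding R_def desc_def cond_def apply simp apply (intro conjI ndI[OF D k]) apply (linarith | presburger)+ done

lemma p_1_4: assumes D: "int d = 4*k+1" and k: "k\<ge>3" and "i \<in> R k 1" "j \<in> R k 4"
  shows "cond d (desc k 1 i) (desc k 4 j)"
  using k assms(3-) unfolding R_def desc_def cond_def apply simp apply (intro conjI ndI[OF D k]) apply (linarith | presburger)+ done

lemma p_1_5: assumes D: "int d = 4*k+1" and k: "k\<ge>3" and "i \<in> R k 1" "j \<in> R k 5"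
  shows "cond d (desc k 1 i) (desc k 5 j)"
  using k assms(3-) unfolding R_def desc_def cond_def apply simp apply (intro conjI ndI[OF D k]) apply (linarith | presburger)+ done

lemma p_1_6: assumes D: "int d = 4*k+1" and k: "k\<ge>3" and "i \<in> R k 1" "j \<in> R k 6"
  shows "cond d (desc k 1 i) (desc k 6 j)"
  using k assms(3-) unfolding R_def desc_def cond_def apply simp apply (intro conjI ndI[OF D k]) apply (linarith | presburger)+ done

lemma p_1_7: assumes D: "int d = 4*k+1" and k: "k\<ge>3" and "i \<in> R k 1" "j \<in> R k 7"
  shows "cond d (desc k 1 i) (desc k 7 j)"
  using k assms(3-) unfolding R_def desc_def cond_def apply simp apply (intro conjI ndI[OF D k]) apply (linarith | presburger)+ done

lemma p_1_8: assumes D: "int d = 4*k+1" and k: "k\<ge>3" and "i \<in> R k 1" "j \<in> R k 8"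
  shows "cond d (desc k 1 i) (desc k 8 j)"
  using k assms(3-) unfolding R_def desc_def cond_def apply simp apply (intro conjI ndI[OF D k]) apply (linarith | presburger)+ done

lemma p_1_9: assumes D: "int d = 4*k+1" and k: "k\<ge>3" and "i \<in> R k 1" "j \<in> R k 9"
  shows "cond d (desc k 1 i) (desc k 9 j)"
  using k assms(3-) unfolding R_def desc_def cond_def apply simp apply (intro conjI ndI[OF D k]) apply (linarith | presburger)+ done

lemma p_1_10: assumes D: "int d = 4*k+1" and k: "k\<ge>3" and "i \<in> R k 1" "j \<in> R k 10"
  shows "cond d (desc k 1 i) (desc k 10 j)"
  using k assms(3-) unfolding R_def desc_def cond_def apply simp apply (intro conjI ndI[OF D k]) apply (linarith | presburger)+ done

lemma p_1_11: assumes D: "int d = 4*k+1" and k: "k\<ge>3" and "i \<in> R k 1" "j \<in> R k 11"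
  shows "cond d (desc k 1 i) (desc k 11 j)"
  using k assms(3-) unfolding R_def desc_def cond_def apply simp apply (intro conjI ndI[OF D k]) apply (linarith | presburger)+ done

lemma p_1_12: assumes D: "int d = 4*k+1" and k: "k\<ge>3" and "i \<in> R k 1" "j \<in> R k 12"
  shows "cond d (desc k 1 i) (desc k 12 j)"
  using k assms(3-) unfolding R_def desc_def cond_def apply simp apply (intro conjI ndI[OF D k]) apply (linarith | presburger)+ done

lemma p_1_13: assumes D: "int d = 4*k+1" and k: "k\<ge>3" and "i \<in> R k 1" "j \<in> R k 13"
  shows "cond d (desc k 1 i) (desc k 13 j)"
  using k assms(3-) unfolding R_def desc_def cond_def apply simp apply (intro conjI ndI[OF D k]) apply (linarith | presburger)+ done

lemma p_2_2: assumes D: "int d = 4*k+1" and k: "k\<ge>3" and "i \<in> R k 2" "j \<in> R k 2" "i < j"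
  shows "cond d (desc k 2 i) (desc k 2 j)"
  using k assms(3-) unfolding R_def desc_def cond_def apply simp apply (intro conjI ndI[OF D k]) apply (linarith | presburger)+ done

lemma p_2_3: assumes D: "int d = 4*k+1" and k: "k\<ge>3" and "i \<in> R k 2" "j \<in> R k 3"
  shows "cond d (desc k 2 i) (desc k 3 j)"
  using k assms(3-) unfolding R_def desc_def cond_def apply simp apply (intro conjI ndI[OF D k]) apply (linarith | presburger)+ done

lemma p_2_4: assumes D: "int d = 4*k+1" and k: "k\<ge>3" and "i \<in> R k 2" "j \<in> R k 4"
  shows "cond d (desc k 2 i) (desc k 4 j)"
  using k assms(3-) unfolding R_def desc_def cond_def apply simp apply (intro conjI ndI[OF D k]) apply (linarith | presburger)+ done

lemma p_2_5: assumes D: "int d = 4*k+1" and k: "k\<ge>3" and "i \<in> R k 2" "j \<in> R k 5"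
  shows "cond d (desc k 2 i) (desc k 5 j)"
  using k assms(3-) unfolding R_def desc_def cond_def apply simp apply (intro conjI ndI[OF D k]) apply (linarith | presburger)+ done

lemma p_2_6: assumes D: "int d = 4*k+1" and k: "k\<ge>3" and "i \<in> R k 2" "j \<in> R k 6"
  shows "cond d (desc k 2 i) (desc k 6 j)"
  using k assms(3-) unfolding R_def desc_def cond_def apply simp apply (intro conjI ndI[OF D k]) apply (linarith | presburger)+ done

lemma p_2_7: assumes D: "int d = 4*k+1" and k: "k\<ge>3" and "i \<in> R k 2" "j \<in> R k 7"
  shows "cond d (desc k 2 i) (desc k 7 j)"
  using k assms(3-) unfolding R_def desc_def cond_def apply simp apply (intro conjI ndI[OF D k]) apply (linarith | presburger)+ done

lemma p_2_8: assumes D: "int d = 4*k+1" and k: "k\<ge>3" and "i \<in> R k 2" "j \<in> R k 8"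
  shows "cond d (desc k 2 i) (desc k 8 j)"
  using k assms(3-) unfolding R_def desc_def cond_def apply simp apply (intro conjI ndI[OF D k]) apply (linarith | presburger)+ done

lemma p_2_9: assumes D: "int d = 4*k+1" and k: "k\<ge>3" and "i \<in> R k 2" "j \<in> R k 9"
  shows "cond d (desc k 2 i) (desc k 9 j)"
  using k assms(3-) unfolding R_def desc_def cond_def apply simp apply (intro conjI ndI[OF D k]) apply (linarith | presburger)+ done

lemma p_2_10: assumes D: "int d = 4*k+1" and k: "k\<ge>3" and "i \<in> R k 2" "j \<in> R k 10"
  shows "cond d (desc k 2 i) (desc k 10 j)"
  using k assms(3-) unfolding R_def desc_def cond_def apply simp apply (intro conjI ndI[OF D k]) apply (linarith | presburger)+ done

lemma p_2_11: assumes D: "int d = 4*k+1" and k: "k\<ge>3" and "i \<in> R k 2" "j \<in> R k 11"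
  shows "cond d (desc k 2 i) (desc k 11 j)"
  using k assms(3-) unfolding R_def desc_def cond_def apply simp apply (intro conjI ndI[OF D k]) apply (linarith | presburger)+ done

lemma p_2_12: assumes D: "int d = 4*k+1" and k: "k\<ge>3" and "i \<in> R k 2" "j \<in> R k 12"
  shows "cond d (desc k 2 i) (desc k 12 j)"
  using k assms(3-) unfolding R_def desc_def cond_def apply simp apply (intro conjI ndI[OF D k]) apply (linarith | presburger)+ done

lemma p_2_13: assumes D: "int d = 4*k+1" and k: "k\<ge>3" and "i \<in> R k 2" "j \<in> R k 13"
  shows "cond d (desc k 2 i) (desc k 13 j)"
  using k assms(3-) unfolding R_def desc_def cond_def apply simp apply (intro conjI ndI[OF D k]) apply (linarith | presburger)+ done

lemma p_3_3: assumes D: "int d = 4*k+1" and k: "k\<ge>3" and "i \<in> R k 3" "j \<in> R k 3" "i < j"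
  shows "cond d (desc k 3 i) (desc k 3 j)"
  using k assms(3-) unfolding R_def desc_def cond_def apply simp apply (intro conjI ndI[OF D k]) apply (linarith | presburger)+ done

lemma p_3_4: assumes D: "int d = 4*k+1" and k: "k\<ge>3" and "i \<in> R k 3" "j \<in> R k 4"
  shows "cond d (desc k 3 i) (desc k 4 j)"
  using k assms(3-) unfolding R_def desc_def cond_def apply simp apply (intro conjI ndI[OF D k]) apply (linarith | presburger)+ done

lemma p_3_5: assumes D: "int d = 4*k+1" and k: "k\<ge>3" and "i \<in> R k 3" "j \<in> R k 5"
  shows "cond d (desc k 3 i) (desc k 5 j)"
  using k assms(3-) unfolding R_def desc_def cond_def apply simp apply (intro conjI ndI[OF D k]) apply (linarith | presburger)+ done

lemma p_3_6: assumes D: "int d = 4*k+1" and k: "k\<ge>3" and "i \<in> R k 3" "j \<in> R k 6"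
  shows "cond d (desc k 3 i) (desc k 6 j)"
  using k assms(3-) unfolding R_def desc_def cond_def apply simp apply (intro conjI ndI[OF D k]) apply (linarith | presburger)+ done

lemma p_3_7: assumes D: "int d = 4*k+1" and k: "k\<ge>3" and "i \<in> R k 3" "j \<in> R k 7"
  shows "cond d (desc k 3 i) (desc k 7 j)"
  using k assms(3-) unfolding R_def desc_def cond_def apply simp apply (intro conjI ndI[OF D k]) apply (linarith | presburger)+ done

lemma p_3_8: assumes D: "int d = 4*k+1" and k: "k\<ge>3" and "i \<in> R k 3" "j \<in> R k 8"
  shows "cond d (desc k 3 i) (desc k 8 j)"
  using k assms(3-) unfolding R_def desc_def cond_def apply simp apply (intro conjI ndI[OF D k]) apply (linarith | presburger)+ done

lemma p_3_9: assumes D: "int d = 4*k+1" and k: "k\<ge>3" and "i \<in> R k 3" "j \<in> R k 9"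
  shows "cond d (desc k 3 i) (desc k 9 j)"
  using k assms(3-) unfolding R_def desc_def cond_def apply simp apply (intro conjI ndI[OF D k]) apply (linarith | presburger)+ done

lemma p_3_10: assumes D: "int d = 4*k+1" and k: "k\<ge>3" and "i \<in> R k 3" "j \<in> R k 10"
  shows "cond d (desc k 3 i) (desc k 10 j)"
  using k assms(3-) unfolding R_def desc_def cond_def apply simp apply (intro conjI ndI[OF D k]) apply (linarith | presburger)+ done

lemma p_3_11: assumes D: "int d = 4*k+1" and k: "k\<ge>3" and "i \<in> R k 3" "j \<in> R k 11"
  shows "cond d (desc k 3 i) (desc k 11 j)"
  using k assms(3-) unfolding R_def desc_def cond_def apply simp apply (intro conjI ndI[OF D k]) apply (linarith | presburger)+ done

lemma p_3_12: assumes D: "int d = 4*k+1" and k: "k\<ge>3" and "i \<in> R k 3" "j \<in> R k 12"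
  shows "cond d (desc k 3 i) (desc k 12 j)"
  using k assms(3-) unfolding R_def desc_def cond_def apply simp apply (intro conjI ndI[OF D k]) apply (linarith | presburger)+ done

lemma p_3_13: assumes D: "int d = 4*k+1" and k: "k\<ge>3" and "i \<in> R k 3" "j \<in> R k 13"
  shows "cond d (desc k 3 i) (desc k 13 j)"
  using k assms(3-) unfolding R_def desc_def cond_def apply simp apply (intro conjI ndI[OF D k]) apply (linarith | presburger)+ done

lemma p_4_4: assumes D: "int d = 4*k+1" and k: "k\<ge>3" and "i \<in> R k 4" "j \<in> R k 4" "i < j"
  shows "cond d (desc k 4 i) (desc k 4 j)"
  using k assms(3-) unfolding R_def desc_def cond_def apply simp apply (intro conjI ndI[OF D k]) apply (linarith | presburger)+ done

lemma p_4_5: assumes D: "int d = 4*k+1" and k: "k\<ge>3" and "i \<in> R k 4" "j \<in> R k 5"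
  shows "cond d (desc k 4 i) (desc k 5 j)"
  using k assms(3-) unfolding R_def desc_def cond_def apply simp apply (intro conjI ndI[OF D k]) apply (linarith | presburger)+ done

lemma p_4_6: assumes D: "int d = 4*k+1" and k: "k\<ge>3" and "i \<in> R k 4" "j \<in> R k 6"
  shows "cond d (desc k 4 i) (desc k 6 j)"
  using k assms(3-) unfolding R_def desc_def cond_def apply simp apply (intro conjI ndI[OF D k]) apply (linarith | presburger)+ done

lemma p_4_7: assumes D: "int d = 4*k+1" and k: "k\<ge>3" and "i \<in> R k 4" "j \<in> R k 7"
  shows "cond d (desc k 4 i) (desc k 7 j)"
  using k assms(3-) unfolding R_def desc_def cond_def apply simp apply (intro conjI ndI[OF D k]) apply (linarith | presburger)+ done

lemma p_4_8: assumes D: "int d = 4*k+1" and k: "k\<ge>3" and "i \<in> R k 4" "j \<in> R k 8"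
  shows "cond d (desc k 4 i) (desc k 8 j)"
  using k assms(3-) unfolding R_def desc_def cond_def apply simp apply (intro conjI ndI[OF D k]) apply (linarith | presburger)+ done

lemma p_4_9: assumes D: "int d = 4*k+1" and k: "k\<ge>3" and "i \<in> R k 4" "j \<in> R k 9"
  shows "cond d (desc k 4 i) (desc k 9 j)"
  using k assms(3-) unfolding R_def desc_def cond_def apply simp apply (intro conjI ndI[OF D k]) apply (linarith | presburger)+ done

lemma p_4_10: assumes D: "int d = 4*k+1" and k: "k\<ge>3" and "i \<in> R k 4" "j \<in> R k 10"
  shows "cond d (desc k 4 i) (desc k 10 j)"
  using k assms(3-) unfolding R_def desc_def cond_def apply simp apply (intro conjI ndI[OF D k]) apply (linarith | presburger)+ done

lemma p_4_11: assumes D: "int d = 4*k+1" and k: "k\<ge>3" and "i \<in> R k 4" "j \<in> R k 11"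
  shows "cond d (desc k 4 i) (desc k 11 j)"
  using k assms(3-) unfolding R_def desc_def cond_def apply simp apply (intro conjI ndI[OF D k]) apply (linarith | presburger)+ done

lemma p_4_12: assumes D: "int d = 4*k+1" and k: "k\<ge>3" and "i \<in> R k 4" "j \<in> R k 12"
  shows "cond d (desc k 4 i) (desc k 12 j)"
  using k assms(3-) unfolding R_def desc_def cond_def apply simp apply (intro conjI ndI[OF D k]) apply (linarith | presburger)+ done

lemma p_4_13: assumes D: "int d = 4*k+1" and k: "k\<ge>3" and "i \<in> R k 4" "j \<in> R k 13"
  shows "cond d (desc k 4 i) (desc k 13 j)"
  using k assms(3-) unfolding R_def desc_def cond_def apply simp apply (intro conjI ndI[OF D k]) apply (linarith | presburger)+ done

lemma p_5_5: assumes D: "int d = 4*k+1" and k: "k\<ge>3" and "i \<in> R k 5" "j \<in> R k 5" "i < j"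
  shows "cond d (desc k 5 i) (desc k 5 j)"
  using k assms(3-) unfolding R_def desc_def cond_def by simp

lemma p_5_6: assumes D: "int d = 4*k+1" and k: "k\<ge>3" and "i \<in> R k 5" "j \<in> R k 6"
  shows "cond d (desc k 5 i) (desc k 6 j)"
  using k assms(3-) unfolding R_def desc_def cond_def apply simp apply (intro conjI ndI[OF D k]) apply (linarith | presburger)+ done

lemma p_5_7: assumes D: "int d = 4*k+1" and k: "k\<ge>3" and "i \<in> R k 5" "j \<in> R k 7"
  shows "cond d (desc k 5 i) (desc k 7 j)"
  using k assms(3-) unfolding R_def desc_def cond_def apply simp apply (intro conjI ndI[OF D k]) apply (linarith | presburger)+ done

lemma p_5_8: assumes D: "int d = 4*k+1" and k: "k\<ge>3" and "i \<in> R k 5" "j \<in> R k 8"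
  shows "cond d (desc k 5 i) (desc k 8 j)"
  using k assms(3-) unfolding R_def desc_def cond_def apply simp apply (intro conjI ndI[OF D k]) apply (linarith | presburger)+ done

lemma p_5_9: assumes D: "int d = 4*k+1" and k: "k\<ge>3" and "i \<in> R k 5" "j \<in> R k 9"
  shows "cond d (desc k 5 i) (desc k 9 j)"
  using k assms(3-) unfolding R_def desc_def cond_def apply simp apply (intro conjI ndI[OF D k]) apply (linarith | presburger)+ done

lemma p_5_10: assumes D: "int d = 4*k+1" and k: "k\<ge>3" and "i \<in> R k 5" "j \<in> R k 10"
  shows "cond d (desc k 5 i) (desc k 10 j)"
  using k assms(3-) unfolding R_def desc_def cond_def apply simp apply (intro conjI ndI[OF D k]) apply (linarith | presburger)+ done

lemma p_5_11: assumes D: "int d = 4*k+1" and k: "k\<ge>3" and "i \<in> R k 5" "j \<in> R k 11"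
  shows "cond d (desc k 5 i) (desc k 11 j)"
  using k assms(3-) unfolding R_def desc_def cond_def apply simp apply (intro conjI ndI[OF D k]) apply (linarith | presburger)+ done

lemma p_5_12: assumes D: "int d = 4*k+1" and k: "k\<ge>3" and "i \<in> R k 5" "j \<in> R k 12"
  shows "cond d (desc k 5 i) (desc k 12 j)"
  using k assms(3-) unfolding R_def desc_def cond_def apply simp apply (intro conjI ndI[OF D k]) apply (linarith | presburger)+ done

lemma p_5_13: assumes D: "int d = 4*k+1" and k: "k\<ge>3" and "i \<in> R k 5" "j \<in> R k 13"
  shows "cond d (desc k 5 i) (desc k 13 j)"
  using k assms(3-) unfolding R_def desc_def cond_def apply simp apply (intro conjI ndI[OF D k]) apply (linarith | presburger)+ done

lemma p_6_6: assumes D: "int d = 4*k+1" and k: "k\<ge>3" and "i \<in> R k 6" "j \<in> R k 6" "i < j"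
  shows "cond d (desc k 6 i) (desc k 6 j)"
  using k assms(3-) unfolding R_def desc_def cond_def apply simp apply (intro conjI ndI[OF D k]) apply (linarith | presburger)+ done

lemma p_6_7: assumes D: "int d = 4*k+1" and k: "k\<ge>3" and "i \<in> R k 6" "j \<in> R k 7"
  shows "cond d (desc k 6 i) (desc k 7 j)"
  using k assms(3-) unfolding R_def desc_def cond_def apply simp apply (intro conjI ndI[OF D k]) apply (linarith | presburger)+ done

lemma p_6_8: assumes D: "int d = 4*k+1" and k: "k\<ge>3" and "i \<in> R k 6" "j \<in> R k 8"
  shows "cond d (desc k 6 i) (desc k 8 j)"
  using k assms(3-) unfolding R_def desc_def cond_def apply simp apply (intro conjI ndI[OF D k]) apply (linarith | presburger)+ done

lemma p_6_9: assumes D: "int d = 4*k+1" and k: "k\<ge>3" and "i \<in> R k 6" "j \<in> R k 9"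
  shows "cond d (desc k 6 i) (desc k 9 j)"
  using k assms(3-) unfolding R_def desc_def cond_def apply simp apply (intro conjI ndI[OF D k]) apply (linarith | presburger)+ done

lemma p_6_10: assumes D: "int d = 4*k+1" and k: "k\<ge>3" and "i \<in> R k 6" "j \<in> R k 10"
  shows "cond d (desc k 6 i) (desc k 10 j)"
  using k assms(3-) unfolding R_def desc_def cond_def apply simp apply (intro conjI ndI[OF D k]) apply (linarith | presburger)+ done

lemma p_6_11: assumes D: "int d = 4*k+1" and k: "k\<ge>3" and "i \<in> R k 6" "j \<in> R k 11"
  shows "cond d (desc k 6 i) (desc k 11 j)"
  using k assms(3-) unfolding R_def desc_def cond_def apply simp apply (intro conjI ndI[OF D k]) apply (linarith | presburger)+ done

lemma p_6_12: assumes D: "int d = 4*k+1" and k: "k\<ge>3" and "i \<in> R k 6" "j \<in> R k 12"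
  shows "cond d (desc k 6 i) (desc k 12 j)"
  using k assms(3-) unfolding R_def desc_def cond_def apply simp apply (intro conjI ndI[OF D k]) apply (linarith | presburger)+ done

lemma p_6_13: assumes D: "int d = 4*k+1" and k: "k\<ge>3" and "i \<in> R k 6" "j \<in> R k 13"
  shows "cond d (desc k 6 i) (desc k 13 j)"
  using k assms(3-) unfolding R_def desc_def cond_def apply simp apply (intro conjI ndI[OF D k]) apply (linarith | presburger)+ done

lemma p_7_7: assumes D: "int d = 4*k+1" and k: "k\<ge>3" and "i \<in> R k 7" "j \<in> R k 7" "i < j"
  shows "cond d (desc k 7 i) (desc k 7 j)"
  using k assms(3-) unfolding R_def desc_def cond_def apply simp apply (intro conjI ndI[OF D k]) apply (linarith | presburger)+ done

lemma p_7_8: assumes D: "int d = 4*k+1" and k: "k\<ge>3" and "i \<in> R k 7" "j \<in> R k 8"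
  shows "cond d (desc k 7 i) (desc k 8 j)"
  using k assms(3-) unfolding R_def desc_def cond_def apply simp apply (intro conjI ndI[OF D k]) apply (linarith | presburger)+ done

lemma p_7_9: assumes D: "int d = 4*k+1" and k: "k\<ge>3" and "i \<in> R k 7" "j \<in> R k 9"
  shows "cond d (desc k 7 i) (desc k 9 j)"
  using k assms(3-) unfolding R_def desc_def cond_def apply simp apply (intro conjI ndI[OF D k]) apply (linarith | presburger)+ done

lemma p_7_10: assumes D: "int d = 4*k+1" and k: "k\<ge>3" and "i \<in> R k 7" "j \<in> R k 10"
  shows "cond d (desc k 7 i) (desc k 10 j)"
  using k assms(3-) unfolding R_def desc_def cond_def apply simp apply (intro conjI ndI[OF D k]) apply (linarith | presburger)+ done

lemma p_7_11: assumes D: "int d = 4*k+1" and k: "k\<ge>3" and "i \<in> R k 7" "j \<in> R k 11"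
  shows "cond d (desc k 7 i) (desc k 11 j)"
  using k assms(3-) unfolding R_def desc_def cond_def apply simp apply (intro conjI ndI[OF D k]) apply (linarith | presburger)+ done

lemma p_7_12: assumes D: "int d = 4*k+1" and k: "k\<ge>3" and "i \<in> R k 7" "j \<in> R k 12"
  shows "cond d (desc k 7 i) (desc k 12 j)"
  using k assms(3-) unfolding R_def desc_def cond_def apply simp apply (intro conjI ndI[OF D k]) apply (linarith | presburger)+ done

lemma p_7_13: assumes D: "int d = 4*k+1" and k: "k\<ge>3" and "i \<in> R k 7" "j \<in> R k 13"
  shows "cond d (desc k 7 i) (desc k 13 j)"
  using k assms(3-) unfolding R_def desc_def cond_def apply simp apply (intro conjI ndI[OF D k]) apply (linarith | presburger)+ done

lemma p_8_8: assumes D: "int d = 4*k+1" and k: "k\<ge>3" and "i \<in> R k 8" "j \<in> R k 8" "i < j"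
  shows "cond d (desc k 8 i) (desc k 8 j)"
  using k assms(3-) unfolding R_def desc_def cond_def by simp

lemma p_8_9: assumes D: "int d = 4*k+1" and k: "k\<ge>3" and "i \<in> R k 8" "j \<in> R k 9"
  shows "cond d (desc k 8 i) (desc k 9 j)"
  using k assms(3-) unfolding R_def desc_def cond_def apply simp apply (intro conjI ndI[OF D k]) apply (linarith | presburger)+ done

lemma p_8_10: assumes D: "int d = 4*k+1" and k: "k\<ge>3" and "i \<in> R k 8" "j \<in> R k 10"
  shows "cond d (desc k 8 i) (desc k 10 j)"
  using k assms(3-) unfolding R_def desc_def cond_def apply simp apply (intro conjI ndI[OF D k]) apply (linarith | presburger)+ done

lemma p_8_11: assumes D: "int d = 4*k+1" and k: "k\<ge>3" and "i \<in> R k 8" "j \<in> R k 11"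
  shows "cond d (desc k 8 i) (desc k 11 j)"
  using k assms(3-) unfolding R_def desc_def cond_def apply simp apply (intro conjI ndI[OF D k]) apply (linarith | presburger)+ done

lemma p_8_12: assumes D: "int d = 4*k+1" and k: "k\<ge>3" and "i \<in> R k 8" "j \<in> R k 12"
  shows "cond d (desc k 8 i) (desc k 12 j)"
  using k assms(3-) unfolding R_def desc_def cond_def apply simp apply (intro conjI ndI[OF D k]) apply (linarith | presburger)+ done

lemma p_8_13: assumes D: "int d = 4*k+1" and k: "k\<ge>3" and "i \<in> R k 8" "j \<in> R k 13"
  shows "cond d (desc k 8 i) (desc k 13 j)"
  using k assms(3-) unfolding R_def desc_def cond_def apply simp apply (intro conjI ndI[OF D k]) apply (linarith | presburger)+ done

lemma p_9_9: assumes D: "int d = 4*k+1" and k: "k\<ge>3" and "i \<in> R k 9" "j \<in> R k 9" "i < j"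
  shows "cond d (desc k 9 i) (desc k 9 j)"
  using k assms(3-) unfolding R_def desc_def cond_def apply simp apply (intro conjI ndI[OF D k]) apply (linarith | presburger)+ done

lemma p_9_10: assumes D: "int d = 4*k+1" and k: "k\<ge>3" and "i \<in> R k 9" "j \<in> R k 10"
  shows "cond d (desc k 9 i) (desc k 10 j)"
  using k assms(3-) unfolding R_def desc_def cond_def apply simp apply (intro conjI ndI[OF D k]) apply (linarith | presburger)+ done

lemma p_9_11: assumes D: "int d = 4*k+1" and k: "k\<ge>3" and "i \<in> R k 9" "j \<in> R k 11"
  shows "cond d (desc k 9 i) (desc k 11 j)"
  using k assms(3-) unfolding R_def desc_def cond_def apply simp apply (intro conjI ndI[OF D k]) apply (linarith | presburger)+ done

lemma p_9_12: assumes D: "int d = 4*k+1" and k: "k\<ge>3" and "i \<in> R k 9" "j \<in> R k 12"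
  shows "cond d (desc k 9 i) (desc k 12 j)"
  using k assms(3-) unfolding R_def desc_def cond_def apply simp apply (intro conjI ndI[OF D k]) apply (linarith | presburger)+ done

lemma p_9_13: assumes D: "int d = 4*k+1" and k: "k\<ge>3" and "i \<in> R k 9" "j \<in> R k 13"
  shows "cond d (desc k 9 i) (desc k 13 j)"
  using k assms(3-) unfolding R_def desc_def cond_def apply simp apply (intro conjI ndI[OF D k]) apply (linarith | presburger)+ done

lemma p_10_10: assumes D: "int d = 4*k+1" and k: "k\<ge>3" and "i \<in> R k 10" "j \<in> R k 10" "i < j"
  shows "cond d (desc k 10 i) (desc k 10 j)"
  using k assms(3-) unfolding R_def desc_def cond_def apply simp apply (intro conjI ndI[OF D k]) apply (linarith | presburger)+ done

lemma p_10_11: assumes D: "int d = 4*k+1" and k: "k\<ge>3" and "i \<in> R k 10" "j \<in> R k 11"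
  shows "cond d (desc k 10 i) (desc k 11 j)"
  using k assms(3-) unfolding R_def desc_def cond_def apply simp apply (intro conjI ndI[OF D k]) apply (linarith | presburger)+ done

lemma p_10_12: assumes D: "int d = 4*k+1" and k: "k\<ge>3" and "i \<in> R k 10" "j \<in> R k 12"
  shows "cond d (desc k 10 i) (desc k 12 j)"
  using k assms(3-) unfolding R_def desc_def cond_def apply simp apply (intro conjI ndI[OF D k]) apply (linarith | presburger)+ done

lemma p_10_13: assumes D: "int d = 4*k+1" and k: "k\<ge>3" and "i \<in> R k 10" "j \<in> R k 13"
  shows "cond d (desc k 10 i) (desc k 13 j)"
  using k assms(3-) unfolding R_def desc_def cond_def apply simp apply (intro conjI ndI[OF D k]) apply (linarith | presburger)+ done

lemma p_11_11: assumes D: "int d = 4*k+1" and k: "k\<ge>3" and "i \<in> R k 11" "j \<in> R k 11" "i < j"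
  shows "cond d (desc k 11 i) (desc k 11 j)"
  using k assms(3-) unfolding R_def desc_def cond_def apply simp apply (intro conjI ndI[OF D k]) apply (linarith | presburger)+ done

lemma p_11_12: assumes D: "int d = 4*k+1" and k: "k\<ge>3" and "i \<in> R k 11" "j \<in> R k 12"
  shows "cond d (desc k 11 i) (desc k 12 j)"
  using k assms(3-) unfolding R_def desc_def cond_def apply simp apply (intro conjI ndI[OF D k]) apply (linarith | presburger)+ done

lemma p_11_13: assumes D: "int d = 4*k+1" and k: "k\<ge>3" and "i \<in> R k 11" "j \<in> R k 13"
  shows "cond d (desc k 11 i) (desc k 13 j)"
  using k assms(3-) unfolding R_def desc_def cond_def apply simp apply (intro conjI ndI[OF D k]) apply (linarith | presburger)+ done

lemma p_12_12: assumes D: "int d = 4*k+1" and k: "k\<ge>3" and "i \<in> R k 12" "j \<in> R k 12" "i < j"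
  shows "cond d (desc k 12 i) (desc k 12 j)"
  using k assms(3-) unfolding R_def desc_def cond_def apply simp apply (intro conjI ndI[OF D k]) apply (linarith | presburger)+ done

lemma p_12_13: assumes D: "int d = 4*k+1" and k: "k\<ge>3" and "i \<in> R k 12" "j \<in> R k 13"
  shows "cond d (desc k 12 i) (desc k 13 j)"
  using k assms(3-) unfolding R_def desc_def cond_def apply simp apply (intro conjI ndI[OF D k]) apply (linarith | presburger)+ done

lemma p_13_13: assumes D: "int d = 4*k+1" and k: "k\<ge>3" and "i \<in> R k 13" "j \<in> R k 13" "i < j"
  shows "cond d (desc k 13 i) (desc k 13 j)"
  using k assms(3-) unfolding R_def desc_def cond_def apply simp apply (intro conjI ndI[OF D k]) apply (linarith | presburger)+ done

lemma all14: "(\<forall>f::nat. f < 14 \<longrightarrow> P f) = (P 0 \<and> P 1 \<and> P 2 \<and> P 3 \<and> P 4 \<and> P 5 \<and> P 6 \<and> P 7 \<and> P 8 \<and> P 9 \<and> P 10 \<and> P 11 \<and> P 12 \<and> P 13)"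
proof
  assume "\<forall>f::nat. f < 14 \<longrightarrow> P f" thus "P 0 \<and> P 1 \<and> P 2 \<and> P 3 \<and> P 4 \<and> P 5 \<and> P 6 \<and> P 7 \<and> P 8 \<and> P 9 \<and> P 10 \<and> P 11 \<and> P 12 \<and> P 13" by simp
next
  assume c: "P 0 \<and> P 1 \<and> P 2 \<and> P 3 \<and> P 4 \<and> P 5 \<and> P 6 \<and> P 7 \<and> P 8 \<and> P 9 \<and> P 10 \<and> P 11 \<and> P 12 \<and> P 13"
  show "\<forall>f::nat. f < 14 \<longrightarrow> P f"
  proof (intro allI impI)
    fix f :: nat assume "f < 14"
    hence "f = 0 \<or> f = 1 \<or> f = 2 \<or> f = 3 \<or> f = 4 \<or> f = 5 \<or> f = 6 \<or> f = 7 \<or> f = 8 \<or> f = 9 \<or> f = 10 \<or> f = 11 \<or> f = 12 \<or> f = 13" by presburger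
    thus "P f" using c by (elim disjE) simp_all
  qed
qed

lemma comb_lt: assumes D: "int d = 4*k+1" and k: "k\<ge>3" and i: "i \<in> R k f" "j \<in> R k g"
  and lt: "f < g \<or> (f = g \<and> i < j)" and g: "g < 14"
  shows "cond d (desc k f i) (desc k g j)"
proof -
  have "\<forall>f::nat. f < 14 \<longrightarrow> (\<forall>g::nat. g < 14 \<longrightarrow> (\<forall>i j. i \<in> R k f \<longrightarrow> j \<in> R k g \<longrightarrow> (f < g \<or> (f = g \<and> i < j)) \<longrightarrow> cond d (desc k f i) (desc k g j)))"
    unfolding all14 by (simp add: p_0_0[OF D k] p_0_1[OF D k] p_0_2[OF D k] p_0_3[OF D k] p_0_4[OF D k] p_0_5[OF D k] p_0_6[OF D k] p_0_7[OF D k] p_0_8[OF D k] p_0_9[OF D k] p_0_10[OF D k] p_0_11[OF D k] p_0_12[OF D k] p_0_13[OF D k] p_1_1[OF D k] p_1_2[OF D k] p_1_3[OF D k] p_1_4[OF D k] p_1_5[OF D k] p_1_6[OF D k] p_1_7[OF D k] p_1_8[OF D k] p_1_9[OF D k] p_1_10[OF D k] p_1_11[OF D k] p_1_12[OF D k] p_1_13[OF D k] p_2_2[OF D k] p_2_3[OF D k] p_2_4[OF D k] p_2_5[OF D k] p_2_6[OF D k] p_2_7[OF D k] p_2_8[OF D k] p_2_9[OF D k] p_2_10[OF D k] p_2_11[OF D k] p_2_12[OF D k] p_2_13[OF D k] p_3_3[OF D k] p_3_4[OF D k] p_3_5[OF D k] p_3_6[OF D k] p_3_7[OF D k] p_3_8[OF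 D k] p_3_9[OF D k] p_3_10[OF D k] p_3_11[OF D k] p_3_12[OF D k] p_3_13[OF D k] p_4_4[OF D k] p_4_5[OF D k] p_4_6[OF D k] p_4_7[OF D k] p_4_8[OF D k] p_4_9[OF D k] p_4_10[OF D k] p_4_11[OF D k] p_4_12[OF D k] p_4_13[OF D k] p_5_5[OF D k] p_5_6[OF D k] p_5_7[OF D k] p_5_8[OF D k] p_5_9[OF D k] p_5_10[OF D k] p_5_11[OF D k] p_5_12[OF D k] p_5_13[OF D k] p_6_6[OF D k] p_6_7[OF D k] p_6_8[OF D k] p_6_9[OF D k] p_6_10[OF D k] p_6_11[OF D k] p_6_12[OF D k] p_6_13[OF D k] p_7_7[OF D k] p_7_8[OF D k] p_7_9[OF D k] p_7_10[OF D k] p_7_11[OF D k] p_7_12[OF D k] p_7_13[OF D k] p_8_8[OF D k] p_8_9[OF D k] p_8_10[OF D k] p_8_11[OF D k] p_8_12[OF D k] p_8_13[OF D k] p_9_9[OF D k] p_9_10[OF D k] p_9_11[OF D k] p_9_12[OF D k] p_9_13[OF D k] p_10_10[OF D k] p_10_11[OF D k] p_10_12[OF D k] p_10_13[OF D k] p_11_11[OF D k] p_11_12[OF D k] p_11_13[OF D k] p_12_12[OF D k] p_12_13[OF D k] p_13_13[OF D k] p_0_1[OF D k, unfolded One_nat_def] p_1_1[OF D k, unfolded One_nat_def] p_1_2[OF D k, unfolded One_nat_def] p_1_3[OF D k, unfolded One_nat_def] p_1_4[OF D k, unfolded One_nat_def] p_1_5[OF D k, unfolded One_nat_def] p_1_6[OF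 D k, unfolded One_nat_def] p_1_7[OF D k, unfolded One_nat_def] p_1_8[OF D k, unfolded One_nat_def] p_1_9[OF D k, unfolded One_nat_def] p_1_10[OF D k, unfolded One_nat_def] p_1_11[OF D k, unfolded One_nat_def] p_1_12[OF D k, unfolded One_nat_def] p_1_13[OF D k, unfolded One_nat_def])
  moreover have "f < 14" using lt g by auto
  ultimately show ?thesis using i lt g by blast
qed

lemma comb: assumes D: "int d = 4*k+1" and k: "k\<ge>3"
  and p: "(f,i) \<in> (SIGMA f:{0..<14}. R k f)" and q: "(g,j) \<in> (SIGMA f:{0..<14}. R k f)"
  and ne: "(f,i) \<noteq> (g,j)"
  shows "cond d (desc k f i) (desc k g j)"
proof -
  have i: "i \<in> R k f" "f < 14" using p by auto
  have j: "j \<in> R k g" "g < 14" using q by auto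
  consider "f < g \<or> (f = g \<and> i < j)" | "g < f \<or> (g = f \<and> j < i)" using ne by force
  thus ?thesis
  proof cases
    case 1 thus ?thesis using comb_lt[OF D k i(1) j(1) _ j(2)] by blast
  next
    case 2 thus ?thesis using comb_lt[OF D k j(1) i(1) _ i(2)] cond_sym by blast
  qed
qed

lemma Usets: "C0 e k \<union> C1 e k \<union> C2 e k = (\<lambda>(f,i). line e (desc k f i)) ` (SIGMA f:{0..<14}. R k f)"
proof -
  have S: "{0..<14::nat} = {0,1,2,3,4,5,6,7,8,9,10,11,12,13}" by (auto; presburger)
  have "(\<lambda>(f,i). line e (desc k f i)) ` (SIGMA f:{0..<14}. R k f) = (\<Union>f\<in>{0..<14}. (\<lambda>i. line e (desc k f i)) ` R k f)"
    by auto
  also have "\<dots> = C0 e k \<union> C1 e k \<union> C2 e k"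
    unfolding S C0_def C1_def C2_def by (simp add: desc_def R_def line_def Un_ac insert_commute)
  finally show ?thesis by simp
qed

lemma cardS: assumes "k \<ge> 3" shows "card (SIGMA f:{0..<14::nat}. R k f) = nat (12*k+3)"
proof -
  have S: "{0..<14::nat} = {0,1,2,3,4,5,6,7,8,9,10,11,12,13}" by (auto; presburger)
  have "card (SIGMA f:{0..<14::nat}. R k f) = (\<Sum>f\<in>{0..<14::nat}. card (R k f))"
    by (rule card_SigmaI) (auto simp: R_def)
  also have "\<dots> = nat (12*k+3)" unfolding S using assms by (simp add: R_def nat_add_distrib[symmetric])
  finally show ?thesis .
qed

theorem proposition4p4:
  fixes k :: int and d :: nat and \<eta> :: complex
  assumes "k \<ge> 3" and "int d = 4*k + 1"
    and "\<eta> ^ d = 1" and "\<forall>m::nat. 0 < m \<and> m < d \<longrightarrow> \<eta> ^ m \<noteq> 1"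
  shows "card (C0 \<eta> k \<union> C1 \<eta> k \<union> C2 \<eta> k) = 3 * d
       \<and> (\<forall>L \<in> C0 \<eta> k \<union> C1 \<eta> k \<union> C2 \<eta> k. L \<subseteq> Fermat d)
       \<and> (\<forall>L \<in> C0 \<eta> k \<union> C1 \<eta> k \<union> C2 \<eta> k. \<forall>L' \<in> C0 \<eta> k \<union> C1 \<eta> k \<union> C2 \<eta> k.
            L \<noteq> L' \<longrightarrow> L \<inter> L' = {(0,0,0,0)})"
proof -
  let ?S = "SIGMA f:{0..<14::nat}. R k f"
  let ?h = "\<lambda>(f,i). line \<eta> (desc k f i)"
  have D: "int d = 4*k+1" and k: "k \<ge> 3" using assms by auto
  have pr: "prim \<eta> d" unfolding prim_def using assms by auto
  have nz: "\<eta> \<noteq> 0" using prim_nz[OF pr] .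
  have od: "odd d"
  proof -
    have "d = 4 * nat k + 1" using D k by linarith
    thus ?thesis by simp
  qed
  have U: "C0 \<eta> k \<union> C1 \<eta> k \<union> C2 \<eta> k = ?h ` ?S" by (rule Usets)
  have dj: "?h p \<inter> ?h q = {(0,0,0,0)}" if "p \<in> ?S" "q \<in> ?S" "p \<noteq> q" for p q
  proof -
    obtain f i where p: "p = (f,i)" by (cases p)
    obtain g j where q: "q = (g,j)" by (cases q)
    have "cond d (desc k f i) (desc k g j)" using comb[OF D k] that p q by blast
    thus ?thesis using line_disj[OF pr] p q by simp
  qed
  have inj: "inj_on ?h ?S"
  proof (rule inj_onI)
    fix p q assume pq: "p \<in> ?S" "q \<in> ?S" "?h p = ?h q"
    show "p = q"
    proof (rule ccontr)
      assume "p \<noteq> q"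
      hence "?h p = {(0,0,0,0)}" using dj pq by (metis Int_absorb)
      moreover obtain f i where "p = (f,i)" by (cases p)
      ultimately show False using line_nz[OF nz, of "desc k f i"] by auto
    qed
  qed
  have c1: "card (C0 \<eta> k \<union> C1 \<eta> k \<union> C2 \<eta> k) = 3 * d"
  proof -
    have "card (C0 \<eta> k \<union> C1 \<eta> k \<union> C2 \<eta> k) = card ?S" unfolding U by (rule card_image[OF inj])
    also have "\<dots> = nat (12*k+3)" by (rule cardS[OF k])
    also have "\<dots> = 3 * d" using D by linarith
    finally show ?thesis .
  qed
  have c2: "\<forall>L \<in> C0 \<eta> k \<union> C1 \<eta> k \<union> C2 \<eta> k. L \<subseteq> Fermat d"
    unfolding U using line_F[OF pr od] by auto
  have c3: "\<forall>L \<in> C0 \<eta> k \<union> C1 \<eta> k \<union> C2 \<eta> k. \<forall>L' \<in> C0 \<eta> k \<union> C1 \<eta> k \<union> C2 \<eta> k.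
            L \<noteq> L' \<longrightarrow> L \<inter> L' = {(0,0,0,0)}"
    unfolding U
  proof (intro ballI impI)
    fix L L' assume L: "L \<in> ?h ` ?S" and L': "L' \<in> ?h ` ?S" and ne: "L \<noteq> L'"
    obtain p where p: "p \<in> ?S" "L = ?h p" using L by blast
    obtain q where q: "q \<in> ?S" "L' = ?h q" using L' by blast
    have "p \<noteq> q" using ne p q by blast
    thus "L \<inter> L' = {(0,0,0,0)}" using dj[OF p(1) q(1)] p q by simp
  qed
  show ?thesis using c1 c2 c3 by blast
qed

end
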